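(* Let $d\ge 1$, $D>0$, $\sigma\ge 0$, $\alpha\in[0,1)$, and let $T$ be a positive integer. Let $w^*\in\mathbb{R}^d$ with $\|w^*\|\le D$, and let $(x,\epsilon,b)$ be mutually independent random variables with $x\in\mathbb{R}^d$, $\|x\|\le 1$ a.s., $\mathbb{E}[x]=0$, $\epsilon\in\mathbb{R}$, $|\epsilon|\le\sigma$ a.s., $\mathbb{E}[\epsilon]=0$, $b\in\mathbb{R}$, $\mathbb{P}(b\neq 0)=\alpha$, and set $y=\langle w^*,x\rangle+\epsilon+b$. Let $R=6D+\sigma$ and let $\bar w$ be the output of the following algorithm: set $w_1=0$ and $\eta=\frac{D}{R\sqrt T}$; for $t=1,\dots,T$, draw a fresh independent sample $(x_t,y_t)$ distributed as $(x,y)$, set $g_t=\phi_R(\langle w_t,x_t\rangle-y_t)\,x_t$ and $w_{t+1}=\Pi_{\mathcal W}(w_t-\eta g_t)$; output $\bar w=\frac1T\sum_{t=1}^T w_t$. Then $$\mathbb{E}[F(\bar w)]-F(w^* )\le \frac{RD}{(1-\alpha)\sqrt T}.$$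
   Context: $\mathcal W=\{w\in\mathbb{R}^d:\|w\|\le D\}$ and $\Pi_{\mathcal W}(u)=\arg\min_{w\in\mathcal W}\|w-u\|$ is the Euclidean projection. $\phi_R(s)=\min\{R,\max\{s,-R\}\}$ (the derivative of the Huber loss $h_R(s)=\frac12 s^2$ if $|s|\le R$, $h_R(s)=R(|s|-\frac12R)$ otherwise). $F(w)=\mathbb{E}_{x,\epsilon}\big[\tfrac12(\langle w,x\rangle-\langle w^*,x\rangle-\epsilon)^2\big]$ is the expected squared loss on uncorrupted data (i.e. with $b=0$). The expectation $\mathbb{E}[F(\bar w)]$ is over the samples drawn by the algorithm. *)

theory Defs
  imports "HOL-Probability.Probability"
begin

text \<open>Clipping function phi_R (derivative of the Huber loss).\<close>
definition phi :: "real \<Rightarrow> real \<Rightarrow> real" where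
  "phi R s = min R (max s (-R))"

definition Wset :: "real \<Rightarrow> 'a::euclidean_space set" where
  "Wset D = {w. norm w \<le> D}"

definition proj :: "real \<Rightarrow> 'a::euclidean_space \<Rightarrow> 'a" where
  "proj D u = closest_point (Wset D) u"

text \<open>Iterates of the algorithm. A sample is a triple (x, (eps, b)); the label is
  y = <w*,x> + eps + b. Index 0 corresponds to w_1 of the paper; sample S t is the
  (t+1)-st sample.\<close>
primrec sgd_iter :: "real \<Rightarrow> real \<Rightarrow> real \<Rightarrow> 'a::euclidean_space \<Rightarrow>
    (nat \<Rightarrow> 'a \<times> real \<times> real) \<Rightarrow> nat \<Rightarrow> 'a" where
  "sgd_iter D R eta wstar S 0 = 0"
| "sgd_iter D R eta wstar S (Suc t) =
     (let w = sgd_iter D R eta wstar S t;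
          x = fst (S t);
          y = inner wstar x + fst (snd (S t)) + snd (snd (S t));
          g = phi R (inner w x - y) *\<^sub>R x
      in proj D (w - eta *\<^sub>R g))"

definition sgd_avg :: "real \<Rightarrow> real \<Rightarrow> nat \<Rightarrow> 'a::euclidean_space \<Rightarrow>
    (nat \<Rightarrow> 'a \<times> real \<times> real) \<Rightarrow> 'a" where
  "sgd_avg D R T wstar S =
     (1 / real T) *\<^sub>R (\<Sum>t<T. sgd_iter D R (D / (R * sqrt (real T))) wstar S t)"

text \<open>Expected squared loss on uncorrupted data.\<close>
definition sq_risk :: "'a::euclidean_space measure \<Rightarrow> real measure \<Rightarrow> 'a \<Rightarrow> 'a \<Rightarrow> real" where
  "sq_risk Mx Me wstar w =
     (\<integral>z. (1/2) * (inner w (fst z) - inner wstar (fst z) - snd z)\<^sup>2 \<partial>(Mx \<Otimes>\<^sub>M Me))"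

end

theory Submission imports Defs begin


lemma pair_sf: "prob_space A \<Longrightarrow> prob_space B \<Longrightarrow> pair_sigma_finite A B"
  unfolding pair_sigma_finite_def by (auto intro: prob_space_imp_sigma_finite)

lemma AE_pair_fst:
  assumes "prob_space B" "AE x in A. Q x"
  shows "AE z in A \<Otimes>\<^sub>M B. Q (fst z)"
proof (rule AE_distrD[of fst "A \<Otimes>\<^sub>M B" A Q])
  show "fst \<in> measurable (A \<Otimes>\<^sub>M B) A" by simp
  show "AE x in distr (A \<Otimes>\<^sub>M B) A fst. Q x"
    unfolding prob_space.distr_pair_fst[OF assms(1), of A] using assms(2) .
qed

lemma AE_pair_snd:
  assumes A: "prob_space A" and B: "prob_space B" and ae: "AE y in B. Q y"
  shows "AE z in A \<Otimes>\<^sub>M B. Q (snd z)"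
proof (rule AE_distrD[of snd "A \<Otimes>\<^sub>M B" B Q])
  show "snd \<in> measurable (A \<Otimes>\<^sub>M B) B" by simp
  interpret ps: pair_sigma_finite A B using pair_sf[OF A B] .
  have "distr (A \<Otimes>\<^sub>M B) B snd = distr (distr (B \<Otimes>\<^sub>M A) (A \<Otimes>\<^sub>M B) (\<lambda>(x, y). (y, x))) B snd"
    using ps.distr_pair_swap by simp
  also have "\<dots> = distr (B \<Otimes>\<^sub>M A) B (snd \<circ> (\<lambda>(x, y). (y, x)))"
    by (rule distr_distr) auto
  also have "snd \<circ> (\<lambda>(x, y). (y, x)) = fst" by auto
  also have "distr (B \<Otimes>\<^sub>M A) B fst = B" using prob_space.distr_pair_fst[OF A, of B] .
  finally have eq: "distr (A \<Otimes>\<^sub>M B) B snd = B" .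
  show "AE x in distr (A \<Otimes>\<^sub>M B) B snd. Q x" unfolding eq using ae .
qed

lemma pair_int_mult:
  fixes f :: "'a \<Rightarrow> real" and g :: "'b \<Rightarrow> real"
  assumes A: "prob_space A" and B: "prob_space B"
    and fm: "f \<in> borel_measurable A" and gm: "g \<in> borel_measurable B"
    and fb: "AE x in A. \<bar>f x\<bar> \<le> K" and gb: "AE y in B. \<bar>g y\<bar> \<le> L"
  shows "integrable (A \<Otimes>\<^sub>M B) (\<lambda>z. f (fst z) * g (snd z))"
    and "integral\<^sup>L (A \<Otimes>\<^sub>M B) (\<lambda>z. f (fst z) * g (snd z)) = integral\<^sup>L A f * integral\<^sup>L B g"
proof -
  interpret ps: pair_sigma_finite A B using pair_sf[OF A B] .
  interpret pp: prob_space "A \<Otimes>\<^sub>M B" using A B by (intro prob_space_pair)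
  have "AE z in A \<Otimes>\<^sub>M B. \<bar>f (fst z)\<bar> \<le> K" using AE_pair_fst[OF B fb] .
  moreover have "AE z in A \<Otimes>\<^sub>M B. \<bar>g (snd z)\<bar> \<le> L" using AE_pair_snd[OF A B gb] .
  ultimately have "AE z in A \<Otimes>\<^sub>M B. norm (f (fst z) * g (snd z)) \<le> K * L"
    by eventually_elim (auto simp: abs_mult intro!: mult_mono)
  moreover have "(\<lambda>z. f (fst z) * g (snd z)) \<in> borel_measurable (A \<Otimes>\<^sub>M B)"
    using fm gm by measurable
  ultimately show int: "integrable (A \<Otimes>\<^sub>M B) (\<lambda>z. f (fst z) * g (snd z))"
    by (rule pp.integrable_const_bound)
  have int': "integrable (A \<Otimes>\<^sub>M B) (case_prod (\<lambda>x y. f x * g y))"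
    using int by (simp add: case_prod_beta')
  have "integral\<^sup>L (A \<Otimes>\<^sub>M B) (\<lambda>z. f (fst z) * g (snd z)) = (\<integral>x. (\<integral>y. f x * g y \<partial>B) \<partial>A)"
    using ps.integral_fst[OF int'] by (simp add: case_prod_beta')
  also have "\<dots> = integral\<^sup>L A f * integral\<^sup>L B g" by simp
  finally show "integral\<^sup>L (A \<Otimes>\<^sub>M B) (\<lambda>z. f (fst z) * g (snd z)) = integral\<^sup>L A f * integral\<^sup>L B g" .
qed



lemma Wset_eq: "Wset D = cball (0::'a::euclidean_space) D"
  by (auto simp: Wset_def)

lemma proj_cont: "D \<ge> 0 \<Longrightarrow> continuous_on UNIV (proj D :: 'a::euclidean_space \<Rightarrow> 'a)"
  unfolding proj_def Wset_eq
  by (intro continuous_on_closest_point) auto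

lemma proj_meas: "D \<ge> 0 \<Longrightarrow> (proj D :: 'a::euclidean_space \<Rightarrow> 'a) \<in> borel_measurable borel"
  by (rule borel_measurable_continuous_onI[OF proj_cont])

lemma sgd_iter_cong: "(\<forall>j<t. S' j = S j) \<Longrightarrow> sgd_iter D R eta ws S' t = sgd_iter D R eta ws S t"
  by (induction t) (auto simp: Let_def)

lemma proj_in: "D \<ge> 0 \<Longrightarrow> norm (proj D (u::'a::euclidean_space)) \<le> D"
  using closest_point_in_set[of "cball (0::'a) D" u] unfolding proj_def Wset_eq by auto

lemma proj_nonexp: "D \<ge> 0 \<Longrightarrow> norm (v::'a::euclidean_space) \<le> D \<Longrightarrow> norm (proj D u - v) \<le> norm (u - v)"
  using closest_point_lipschitz[of "cball (0::'a) D" u v] closest_point_self[of v "cball (0::'a) D"]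
  unfolding proj_def Wset_eq by (auto simp: dist_norm)

lemma norm_sq_expand: "(norm (a - c *\<^sub>R x))\<^sup>2 = (norm a)\<^sup>2 - 2 * c * inner x a + c\<^sup>2 * (norm (x::'a::real_inner))\<^sup>2"
proof -
  have "(norm (a - c *\<^sub>R x))\<^sup>2 = inner a a - 2 * c * inner x a + c * c * inner x x"
    unfolding power2_norm_eq_inner inner_diff_left inner_diff_right inner_scaleR_left inner_scaleR_right
    by (simp add: inner_commute algebra_simps)
  then show ?thesis unfolding power2_norm_eq_inner by (simp add: power2_eq_square)
qed

lemma aux_alg: "(a::real) - 2 * (e * p) * q + (e*p)\<^sup>2 * n = a - 2 * e * (p * q) + e\<^sup>2 * p\<^sup>2 * n"
  by (simp add: power_mult_distrib algebra_simps)

lemma phi_mono: "a \<le> b \<Longrightarrow> phi R a \<le> phi R b"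
  by (auto simp: phi_def)

lemma phi_id: "\<bar>a\<bar> \<le> R \<Longrightarrow> phi R a = a"
  by (auto simp: phi_def)

lemma phi_key:
  assumes "R \<ge> 0" and "b = 0 \<Longrightarrow> \<bar>u\<bar> + \<bar>e\<bar> \<le> R"
  shows "phi R (u + (-e - b)) * u \<ge> u * phi R (-e - b) + u\<^sup>2 * (if b = 0 then 1 else 0)"
proof (cases "b = 0")
  case True
  then have "\<bar>u + (-e - b)\<bar> \<le> R" "\<bar>-e - b\<bar> \<le> R" using assms by auto
  then show ?thesis using True by (simp add: phi_id power2_eq_square algebra_simps)
next
  case False
  have "(phi R (u + (-e - b)) - phi R (-e - b)) * u \<ge> 0"
  proof (cases "u \<ge> 0")
    case True
    then show ?thesis by (intro mult_nonneg_nonneg) (auto intro: phi_mono)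
  next
    case False
    then show ?thesis by (intro mult_nonpos_nonpos) (auto intro: phi_mono)
  qed
  then show ?thesis using False by (simp add: algebra_simps)
qed

lemma num_final:
  fixes D R s c :: real
  assumes "D > 0" "R > 0" "s > 0" "c > 0"
  shows "1/2 * ((1/s\<^sup>2) * (((D\<^sup>2 + s\<^sup>2 * (D / (R * s))\<^sup>2 * R\<^sup>2) / (2 * (D / (R * s)))) / c)) \<le> R * D / (c * s)"
proof -
  have e: "s\<^sup>2 * (D / (R * s))\<^sup>2 * R\<^sup>2 = D\<^sup>2" using assms by (simp add: field_simps power2_eq_square)
  have "(D\<^sup>2 + s\<^sup>2 * (D / (R * s))\<^sup>2 * R\<^sup>2) / (2 * (D / (R * s))) = D * R * s"
    unfolding e using assms by (simp add: field_simps power2_eq_square)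
  then have "1/2 * ((1/s\<^sup>2) * (((D\<^sup>2 + s\<^sup>2 * (D / (R * s))\<^sup>2 * R\<^sup>2) / (2 * (D / (R * s)))) / c)) = R * D / (c * s) / 2"
    using assms by (simp add: field_simps power2_eq_square)
  also have "\<dots> \<le> R * D / (c * s)"
  proof -
    have "R * D / (c * s) > 0" using assms by simp
    moreover have "\<And>x::real. x > 0 \<Longrightarrow> x / 2 \<le> x" by linarith
    ultimately show ?thesis by blast
  qed
  finally show ?thesis .
qed

lemma aux_div: "(e::real) > 0 \<Longrightarrow> 2 * e * x \<le> C \<Longrightarrow> x \<le> C / (2 * e)"
  by (simp add: pos_le_divide_eq mult.commute)

lemma aux_drop: "(a::real) + n\<^sup>2 \<le> c \<Longrightarrow> a \<le> c"
  by (smt (verit) zero_le_power2)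

lemma aux_fin: "(c::real) > 0 \<Longrightarrow> (T::real) > 0 \<Longrightarrow> c * A \<le> B \<Longrightarrow> 1/2 * ((1/T) * A) \<le> 1/2 * ((1/T) * (B / c))"
  by (simp add: pos_le_divide_eq mult.commute)

locale sgd_setup =
  fixes Mx :: "'a::euclidean_space measure"
    and Me Mb :: "real measure"
    and D \<sigma> \<alpha> :: real and T :: nat and wstar :: 'a
  assumes D: "D > 0" and sig: "\<sigma> \<ge> 0" and al0: "0 \<le> \<alpha>" and al1: "\<alpha> < 1" and T: "T > 0"
    and ws: "norm wstar \<le> D"
    and Mx: "prob_space Mx" and Mx_sets: "sets Mx = sets borel"
    and Mx_bd: "AE x in Mx. norm x \<le> 1" and Mx_mean: "(\<integral>x. x \<partial>Mx) = 0"
    and Me: "prob_space Me" and Me_sets: "sets Me = sets borel"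
    and Me_bd: "AE e in Me. \<bar>e\<bar> \<le> \<sigma>" and Me_mean: "(\<integral>e. e \<partial>Me) = 0"
    and Mb: "prob_space Mb" and Mb_sets: "sets Mb = sets borel"
    and Mb_al: "measure Mb {b. b \<noteq> 0} = \<alpha>"
begin

abbreviation "R \<equiv> 6 * D + \<sigma>"
abbreviation "eta \<equiv> D / (R * sqrt (real T))"
abbreviation "M \<equiv> Mx \<Otimes>\<^sub>M (Me \<Otimes>\<^sub>M Mb)"
abbreviation "P \<equiv> PiM {..<T} (\<lambda>_. M)"
abbreviation "w t S \<equiv> sgd_iter D R eta wstar S t"

lemma R_ge: "R \<ge> 2 * D + \<sigma>" "R > 0" using D sig by auto
lemma eta_ge: "eta > 0" using D T sig by (auto intro!: divide_pos_pos)

lemma w_bd: "norm (w t S) \<le> D"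
  using D by (cases t) (auto simp: Let_def intro!: proj_in)

abbreviation "Gz v z \<equiv> phi R (inner v (fst z) - (inner wstar (fst z) + fst (snd z) + snd (snd z))) * inner (fst z) (v - wstar)"

lemma phi_bd: "\<bar>phi R s\<bar> \<le> R" using R_ge by (auto simp: phi_def)

lemma step: "(norm (w (Suc t) S - wstar))\<^sup>2 \<le> (norm (w t S - wstar))\<^sup>2 - 2 * eta * Gz (w t S) (S t) + eta\<^sup>2 * R\<^sup>2 * (norm (fst (S t)))\<^sup>2"
proof -
  define v where "v = w t S"
  define x where "x = fst (S t)"
  define p where "p = phi R (inner v x - (inner wstar x + fst (snd (S t)) + snd (snd (S t))))"
  have ws1: "w (Suc t) S = proj D (v - eta *\<^sub>R (p *\<^sub>R x))"
    by (simp add: v_def x_def p_def Let_def)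
  have G: "Gz (w t S) (S t) = p * inner x (v - wstar)" by (simp add: v_def x_def p_def)
  have "norm (w (Suc t) S - wstar) \<le> norm (v - eta *\<^sub>R (p *\<^sub>R x) - wstar)"
    unfolding ws1 using D ws by (intro proj_nonexp) auto
  also have "v - eta *\<^sub>R (p *\<^sub>R x) - wstar = (v - wstar) - (eta * p) *\<^sub>R x"
    by (simp add: algebra_simps)
  finally have "(norm (w (Suc t) S - wstar))\<^sup>2 \<le> (norm ((v - wstar) - (eta * p) *\<^sub>R x))\<^sup>2"
    by (intro power_mono) auto
  also have "(norm ((v - wstar) - (eta * p) *\<^sub>R x))\<^sup>2 = (norm (v - wstar))\<^sup>2 - 2 * (eta * p) * inner x (v - wstar) + (eta * p)\<^sup>2 * (norm x)\<^sup>2"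
    by (rule norm_sq_expand)
  also have "\<dots> = (norm (v - wstar))\<^sup>2 - 2 * eta * (p * inner x (v - wstar)) + eta\<^sup>2 * p\<^sup>2 * (norm x)\<^sup>2"
    by (rule aux_alg)
  also have "eta\<^sup>2 * p\<^sup>2 * (norm x)\<^sup>2 \<le> eta\<^sup>2 * R\<^sup>2 * (norm x)\<^sup>2"
  proof -
    have "p\<^sup>2 \<le> R\<^sup>2" using phi_bd[of "inner v x - (inner wstar x + fst (snd (S t)) + snd (snd (S t)))"]
      unfolding p_def by (metis abs_ge_zero power2_abs power_mono)
    then show ?thesis by (intro mult_right_mono mult_left_mono) auto
  qed
  finally show ?thesis unfolding G v_def x_def by simp
qed

lemma telescope:
  assumes "n \<le> T" and "\<forall>t<T. norm (fst (S t)) \<le> 1"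
  shows "2 * eta * (\<Sum>t<n. Gz (w t S) (S t)) + (norm (w n S - wstar))\<^sup>2 \<le> D\<^sup>2 + real n * eta\<^sup>2 * R\<^sup>2"
  using assms(1)
proof (induction n)
  case 0
  have "(norm (0 - wstar))\<^sup>2 \<le> D\<^sup>2" using ws by (simp add: power_mono)
  then show ?case by simp
next
  case (Suc n)
  have x1: "(norm (fst (S n)))\<^sup>2 \<le> 1" using assms(2) Suc.prems
    by (simp add: abs_square_le_1)
  have "eta\<^sup>2 * R\<^sup>2 * (norm (fst (S n)))\<^sup>2 \<le> eta\<^sup>2 * R\<^sup>2"
    using x1 by (intro mult_left_le) auto
  note st = step[where t=n and S=S]
  have IH: "2 * eta * (\<Sum>t<n. Gz (w t S) (S t)) + (norm (w n S - wstar))\<^sup>2 \<le> D\<^sup>2 + real n * eta\<^sup>2 * R\<^sup>2"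
    using Suc.IH Suc.prems by simp
  have e1: "2 * eta * (\<Sum>t<Suc n. Gz (w t S) (S t)) = 2 * eta * (\<Sum>t<n. Gz (w t S) (S t)) + 2 * eta * Gz (w n S) (S n)"
    by (simp add: distrib_left)
  have e2: "real (Suc n) * eta\<^sup>2 * R\<^sup>2 = real n * eta\<^sup>2 * R\<^sup>2 + eta\<^sup>2 * R\<^sup>2"
    by (simp add: distrib_right)
  show ?case unfolding e1 e2 using IH st \<open>eta\<^sup>2 * R\<^sup>2 * (norm (fst (S n)))\<^sup>2 \<le> eta\<^sup>2 * R\<^sup>2\<close> by linarith
qed

lemma Mx_id[measurable]: "(\<lambda>x. x) \<in> borel_measurable Mx"
  by (subst measurable_cong_sets[OF Mx_sets refl]) simp
lemma Me_id[measurable]: "(\<lambda>x. x) \<in> borel_measurable Me"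
  by (subst measurable_cong_sets[OF Me_sets refl]) simp
lemma Mb_id[measurable]: "(\<lambda>x. x) \<in> borel_measurable Mb"
  by (subst measurable_cong_sets[OF Mb_sets refl]) simp

lemma N_meas[measurable]: "(\<lambda>n. fst n) \<in> borel_measurable (Me \<Otimes>\<^sub>M Mb)" "(\<lambda>n. snd n) \<in> borel_measurable (Me \<Otimes>\<^sub>M Mb)"
  by measurable
lemma K_meas[measurable]: "(\<lambda>n. fst n) \<in> borel_measurable (Mx \<Otimes>\<^sub>M Me)" "(\<lambda>n. snd n) \<in> borel_measurable (Mx \<Otimes>\<^sub>M Me)"
  by measurable
lemma M_meas[measurable]: "(\<lambda>n. fst n) \<in> borel_measurable M" "(\<lambda>n. fst (snd n)) \<in> borel_measurable M"
   "(\<lambda>n. snd (snd n)) \<in> borel_measurable M"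
  by measurable

lemma inner_bd_ae: "AE x in Mx. \<bar>inner u x\<bar> \<le> norm u"
  using Mx_bd
proof eventually_elim
  case (elim x)
  then show ?case using Cauchy_Schwarz_ineq2[of u x] by (metis mult.right_neutral mult_left_mono norm_ge_zero order_trans)
qed

lemma sq_bd_ae: "AE x in Mx. \<bar>(inner u x)\<^sup>2\<bar> \<le> (norm u)\<^sup>2"
  using inner_bd_ae[of u]
proof eventually_elim
  case (elim x)
  then show ?case by (metis abs_ge_zero abs_power2 power2_abs power_mono)
qed

lemma Mx_int: "integrable Mx (\<lambda>x. x)"
proof -
  interpret prob_space Mx by (rule Mx)
  show ?thesis using Mx_bd by (intro integrable_const_bound[where B=1]) auto
qed

definition Q :: "'a \<Rightarrow> real" where "Q v = (\<integral>x. (inner (v - wstar) x)\<^sup>2 \<partial>Mx)"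

lemma Q_int: "integrable Mx (\<lambda>x. (inner u x)\<^sup>2)"
proof -
  interpret prob_space Mx by (rule Mx)
  show ?thesis using sq_bd_ae[of u] by (intro integrable_const_bound[where B="(norm u)\<^sup>2"]) auto
qed

lemma Q_bd: "0 \<le> Q v" "Q v \<le> (norm (v - wstar))\<^sup>2"
proof -
  interpret prob_space Mx by (rule Mx)
  show "0 \<le> Q v" unfolding Q_def by (intro integral_nonneg_AE) auto
  show "Q v \<le> (norm (v - wstar))\<^sup>2" unfolding Q_def
    using sq_bd_ae[of "v - wstar"] by (intro integral_le_const Q_int) auto
qed

lemma E1: "sq_risk Mx Me wstar v = sq_risk Mx Me wstar wstar + 1/2 * Q v"
proof -
  let ?K = "Mx \<Otimes>\<^sub>M Me"
  let ?a = "\<lambda>x. inner (v - wstar) x"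
  have ae1: "AE x in Mx. \<bar>1/2 * (?a x)\<^sup>2\<bar> \<le> 1/2 * (norm (v - wstar))\<^sup>2"
    using sq_bd_ae[of "v - wstar"] by eventually_elim auto
  have ae2: "AE e in Me. \<bar>1/2 * e\<^sup>2\<bar> \<le> 1/2 * \<sigma>\<^sup>2"
    using Me_bd by eventually_elim (auto, metis abs_ge_zero power2_abs power_mono)
  note p1 = pair_int_mult[OF Mx Me, of "\<lambda>x. 1/2 * (?a x)\<^sup>2" "\<lambda>_. 1", OF _ _ ae1, of 1]
  note p2 = pair_int_mult[OF Mx Me, of "\<lambda>_. 1" "\<lambda>e. 1/2 * e\<^sup>2" 1, OF _ _ _ ae2]
  note p3 = pair_int_mult[OF Mx Me, of ?a "\<lambda>e. e", OF _ _ inner_bd_ae Me_bd]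
  have i1: "integrable ?K (\<lambda>z. 1/2 * (?a (fst z))\<^sup>2 * 1)" using p1(1) by simp
  have i2: "integrable ?K (\<lambda>z. 1 * (1/2 * (snd z)\<^sup>2))" using p2(1) by simp
  have i3: "integrable ?K (\<lambda>z. ?a (fst z) * snd z)" using p3(1) by simp
  have I1: "integral\<^sup>L ?K (\<lambda>z. 1/2 * (?a (fst z))\<^sup>2 * 1) = 1/2 * Q v"
    using p1(2) prob_space.prob_space[OF Me] by (simp add: Q_def)
  have I2: "integral\<^sup>L ?K (\<lambda>z. 1 * (1/2 * (snd z)\<^sup>2)) = (\<integral>e. 1/2 * e\<^sup>2 \<partial>Me)"
    using p2(2) prob_space.prob_space[OF Mx] by simp
  have I3: "integral\<^sup>L ?K (\<lambda>z. ?a (fst z) * snd z) = 0"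
    using p3(2) Me_mean by simp
  have "sq_risk Mx Me wstar v = integral\<^sup>L ?K (\<lambda>z. 1/2 * (?a (fst z))\<^sup>2 * 1 + 1 * (1/2 * (snd z)\<^sup>2) - ?a (fst z) * snd z)"
    unfolding sq_risk_def
    by (rule Bochner_Integration.integral_cong[OF refl]) (simp add: inner_diff_left power2_eq_square algebra_simps)
  also have "\<dots> = 1/2 * Q v + (\<integral>e. 1/2 * e\<^sup>2 \<partial>Me)"
    using i1 i2 i3 I1 I2 I3 by simp
  finally have A: "sq_risk Mx Me wstar v = 1/2 * Q v + (\<integral>e. 1/2 * e\<^sup>2 \<partial>Me)" .
  have "sq_risk Mx Me wstar wstar = integral\<^sup>L ?K (\<lambda>z. 1 * (1/2 * (snd z)\<^sup>2))"
    unfolding sq_risk_def by (rule Bochner_Integration.integral_cong[OF refl]) (simp add: power2_eq_square)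
  then have B: "sq_risk Mx Me wstar wstar = (\<integral>e. 1/2 * e\<^sup>2 \<partial>Me)" using I2 by simp
  show ?thesis using A B by simp
qed

lemma M_prob: "prob_space M"
  using Mx Me Mb by (intro prob_space_pair) (auto intro: prob_space_pair)

lemma P_prob: "prob_space P"
  using M_prob by (intro prob_space_PiM) auto

lemma Mb0: "(\<integral>b. (if b = 0 then 1 else 0) \<partial>Mb) = 1 - \<alpha>"
proof -
  interpret prob_space Mb by (rule Mb)
  have sp: "space Mb = UNIV" using sets_eq_imp_space_eq[OF Mb_sets] by simp
  have ev: "{b. b \<noteq> 0} \<in> sets Mb" using Mb_sets by simp
  have "(\<integral>b. (if b = 0 then 1 else 0) \<partial>Mb) = (\<integral>b. indicator {0::real} b \<partial>Mb)"
    by (rule Bochner_Integration.integral_cong) (auto simp: indicator_def)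
  also have "\<dots> = measure Mb {0}" by (simp add: sp)
  also have "{0::real} = space Mb - {b. b \<noteq> 0}" using sp by auto
  also have "measure Mb (space Mb - {b. b \<noteq> 0}) = 1 - \<alpha>"
    using prob_compl[OF ev] Mb_al by simp
  finally show ?thesis .
qed

lemma N0: "(\<integral>n. (if snd n = 0 then 1 else 0) \<partial>(Me \<Otimes>\<^sub>M Mb)) = 1 - (\<alpha>::real)"
proof -
  have ae: "AE b in Mb. \<bar>(if b = 0 then 1 else 0::real)\<bar> \<le> 1" by simp
  note p = pair_int_mult[OF Me Mb, of "\<lambda>_. 1" "\<lambda>b. if b = 0 then 1 else 0" 1, OF _ _ _ ae]
  have "(\<integral>n. (if snd n = 0 then 1 else 0) \<partial>(Me \<Otimes>\<^sub>M Mb)) = (\<integral>n. 1 * (if snd n = 0 then 1 else 0::real) \<partial>(Me \<Otimes>\<^sub>M Mb))"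
    by simp
  also have "\<dots> = 1 - \<alpha>" using p(2) Mb0 prob_space.prob_space[OF Me] by simp
  finally show ?thesis .
qed

definition Gint :: "'a \<Rightarrow> real" where "Gint v = (\<integral>z. Gz v z \<partial>M)"

lemma Gz_meas[measurable]: "(\<lambda>z. Gz v z) \<in> borel_measurable M"
  unfolding phi_def by measurable

lemma Gz_ae: "AE z in M. \<bar>Gz v z\<bar> \<le> R * norm (v - wstar)"
proof -
  have "AE z in M. \<bar>inner (fst z) (v - wstar)\<bar> \<le> norm (v - wstar)"
    using AE_pair_fst[OF prob_space_pair[OF Me Mb] inner_bd_ae[of "v - wstar"]]
    by (simp add: inner_commute)
  then show ?thesis
  proof eventually_elim
    case (elim z)
    then show ?case using phi_bd R_ge by (simp add: abs_mult) (rule mult_mono, auto)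
  qed
qed

lemma Gz_int: "integrable M (\<lambda>z. Gz v z)"
proof -
  interpret prob_space M by (rule M_prob)
  show ?thesis using Gz_ae[of v] by (intro integrable_const_bound[where B="R * norm (v - wstar)"]) auto
qed

lemma Gint_bd: "\<bar>Gint v\<bar> \<le> R * norm (v - wstar)"
proof -
  interpret prob_space M by (rule M_prob)
  have "\<bar>Gint v\<bar> \<le> (\<integral>z. \<bar>Gz v z\<bar> \<partial>M)" unfolding Gint_def by (rule integral_abs_bound)
  also have "\<dots> \<le> R * norm (v - wstar)"
    using Gz_ae[of v] by (intro integral_le_const integrable_abs Gz_int) auto
  finally show ?thesis .
qed

lemma E2:
  assumes v: "norm v \<le> D"
  shows "(1 - \<alpha>) * Q v \<le> Gint v"
proof -
  let ?f1 = "\<lambda>x. inner x (v - wstar)"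
  let ?g1 = "\<lambda>n. phi R (- fst n - snd n)"
  let ?f2 = "\<lambda>x. (inner (v - wstar) x)\<^sup>2"
  let ?g2 = "\<lambda>n. if snd n = 0 then 1 else (0::real)"
  have ae1: "AE x in Mx. \<bar>?f1 x\<bar> \<le> norm (v - wstar)" using inner_bd_ae[of "v - wstar"] by (simp add: inner_commute)
  have ae2: "AE n in Me \<Otimes>\<^sub>M Mb. \<bar>?g1 n\<bar> \<le> R" using phi_bd by simp
  have ae3: "AE n in Me \<Otimes>\<^sub>M Mb. \<bar>?g2 n\<bar> \<le> 1" by simp
  note p1 = pair_int_mult[OF Mx prob_space_pair[OF Me Mb], of ?f1 ?g1, OF _ _ ae1 ae2]
  note p2 = pair_int_mult[OF Mx prob_space_pair[OF Me Mb], of ?f2 ?g2, OF _ _ sq_bd_ae[of "v - wstar"] ae3]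
  have m1: "?g1 \<in> borel_measurable (Me \<Otimes>\<^sub>M Mb)" unfolding phi_def by measurable
  have f1m: "?f1 \<in> borel_measurable Mx" by measurable
  have f2m: "?f2 \<in> borel_measurable Mx" by measurable
  have g2m: "?g2 \<in> borel_measurable (Me \<Otimes>\<^sub>M Mb)" by measurable
  have int1: "integrable M (\<lambda>z. ?f1 (fst z) * ?g1 (snd z))" by (rule p1(1)[OF f1m m1])
  have int2: "integrable M (\<lambda>z. ?f2 (fst z) * ?g2 (snd z))" by (rule p2(1)[OF f2m g2m])
  have f1i: "integral\<^sup>L Mx ?f1 = 0"
    using integral_inner_left[of "v - wstar" Mx "\<lambda>x. x"] Mx_int Mx_mean by simp
  have I1: "(\<integral>z. ?f1 (fst z) * ?g1 (snd z) \<partial>M) = 0"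
    unfolding p1(2)[OF f1m m1] f1i by simp
  have I2: "(\<integral>z. ?f2 (fst z) * ?g2 (snd z) \<partial>M) = Q v * (1 - \<alpha>)"
    unfolding p2(2)[OF f2m g2m] N0 Q_def ..
  have "(\<integral>z. ?f1 (fst z) * ?g1 (snd z) + ?f2 (fst z) * ?g2 (snd z) \<partial>M) \<le> Gint v"
    unfolding Gint_def
  proof (rule integral_mono_AE)
    show "integrable M (\<lambda>z. ?f1 (fst z) * ?g1 (snd z) + ?f2 (fst z) * ?g2 (snd z))"
      using int1 int2 by (rule Bochner_Integration.integrable_add)
    show "integrable M (\<lambda>z. Gz v z)" by (rule Gz_int)
    have A1: "AE z in M. norm (fst z) \<le> 1" using AE_pair_fst[OF prob_space_pair[OF Me Mb] Mx_bd] .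
    have A2: "AE z in M. \<bar>fst (snd z)\<bar> \<le> \<sigma>"
      using AE_pair_snd[OF Mx prob_space_pair[OF Me Mb] AE_pair_fst[OF Mb Me_bd]] .
    show "AE z in M. ?f1 (fst z) * ?g1 (snd z) + ?f2 (fst z) * ?g2 (snd z) \<le> Gz v z"
      using A1 A2
    proof eventually_elim
      case (elim z)
      define u where "u = inner (v - wstar) (fst z)"
      have "\<bar>u\<bar> \<le> norm (v - wstar) * norm (fst z)" unfolding u_def by (rule Cauchy_Schwarz_ineq2)
      also have "\<dots> \<le> norm (v - wstar)" using elim(1) by (simp add: mult_left_le)
      also have "\<dots> \<le> norm v + norm wstar" by (rule norm_triangle_ineq4)
      finally have "\<bar>u\<bar> \<le> 2 * D" using v ws by simp
      then have hyp: "\<bar>u\<bar> + \<bar>fst (snd z)\<bar> \<le> R" using elim(2) by simp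
      have key: "phi R (u + (- fst (snd z) - snd (snd z))) * u \<ge> u * phi R (- fst (snd z) - snd (snd z)) + u\<^sup>2 * (if snd (snd z) = 0 then 1 else 0)"
        using R_ge hyp by (intro phi_key) auto
      have a: "inner v (fst z) - (inner wstar (fst z) + fst (snd z) + snd (snd z)) = u + (- fst (snd z) - snd (snd z))"
        unfolding u_def by (simp add: inner_diff_left)
      show ?case using key unfolding a by (simp add: u_def inner_commute)
    qed
  qed
  also have "(\<integral>z. ?f1 (fst z) * ?g1 (snd z) + ?f2 (fst z) * ?g2 (snd z) \<partial>M) = Q v * (1 - \<alpha>)"
    using Bochner_Integration.integral_add[OF int1 int2] I1 I2 by simp
  finally show ?thesis by (simp add: mult.commute)
qed

lemma comp_meas:
  assumes "t < T"
  shows "(\<lambda>S. fst (S t)) \<in> borel_measurable P"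
    and "(\<lambda>S. fst (snd (S t))) \<in> borel_measurable P"
    and "(\<lambda>S. snd (snd (S t))) \<in> borel_measurable P"
proof -
  have c: "(\<lambda>S. S t) \<in> measurable P M" using assms by (intro measurable_component_singleton) auto
  have "(\<lambda>S. fst (S t)) \<in> measurable P Mx" using c by measurable
  then show "(\<lambda>S. fst (S t)) \<in> borel_measurable P" using measurable_cong_sets[OF refl Mx_sets] by blast
  have "(\<lambda>S. fst (snd (S t))) \<in> measurable P Me" using c by measurable
  then show "(\<lambda>S. fst (snd (S t))) \<in> borel_measurable P" using measurable_cong_sets[OF refl Me_sets] by blast
  have "(\<lambda>S. snd (snd (S t))) \<in> measurable P Mb" using c by measurable
  then show "(\<lambda>S. snd (snd (S t))) \<in> borel_measurable P" using measurable_cong_sets[OF refl Mb_sets] by blast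
qed

lemma w_meas: "t \<le> T \<Longrightarrow> (\<lambda>S. w t S) \<in> borel_measurable P"
proof (induction t)
  case 0
  then show ?case by simp
next
  case (Suc t)
  then have tT: "t < T" by simp
  note [measurable] = comp_meas[OF tT] Suc.IH[OF less_imp_le[OF tT]]
  have pm: "(proj D :: 'a \<Rightarrow> 'a) \<in> borel_measurable borel" using D by (intro proj_meas) simp
  have "(\<lambda>S. w t S - eta *\<^sub>R (phi R (inner (w t S) (fst (S t)) - (inner wstar (fst (S t)) + fst (snd (S t)) + snd (snd (S t)))) *\<^sub>R fst (S t))) \<in> borel_measurable P"
    unfolding phi_def by measurable
  from measurable_compose[OF this pm] show ?case by (simp add: Let_def)
qed

lemma AE_x_P: "t < T \<Longrightarrow> AE S in P. norm (fst (S t)) \<le> 1"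
proof -
  assume t: "t < T"
  interpret pps: product_prob_space "\<lambda>_. M" "{..<T}" by (rule product_prob_spaceI) (rule M_prob)
  have "AE z in M. norm (fst z) \<le> 1" using AE_pair_fst[OF prob_space_pair[OF Me Mb] Mx_bd] .
  then show ?thesis using t pps.AE_component[where i=t and P="\<lambda>z. norm (fst z) \<le> 1"] by simp
qed

lemma AE_all_x_P: "AE S in P. \<forall>t\<in>{..<T}. norm (fst (S t)) \<le> 1"
  by (intro AE_finite_allI AE_x_P) auto

lemma Gint_meas: "t \<le> T \<Longrightarrow> (\<lambda>S. Gint (w t S)) \<in> borel_measurable P"
proof -
  assume t: "t \<le> T"
  interpret sf: sigma_finite_measure M using M_prob by (rule prob_space_imp_sigma_finite)
  note [measurable] = w_meas[OF t]
  have "(\<lambda>(S, z). Gz (w t S) z) \<in> borel_measurable (P \<Otimes>\<^sub>M M)"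
    unfolding phi_def by measurable
  then show ?thesis unfolding Gint_def by (rule sf.borel_measurable_lebesgue_integral)
qed

lemma wdist: "norm (w t S - wstar) \<le> 2 * D"
proof -
  have "norm (w t S - wstar) \<le> norm (w t S) + norm wstar" by (rule norm_triangle_ineq4)
  then show ?thesis using w_bd[where t=t and S=S] ws by simp
qed

lemma indep_step:
  assumes t: "t < T"
  shows "(\<integral>S. Gz (w t S) (S t) \<partial>P) = (\<integral>S. Gint (w t S) \<partial>P)"
    and "integrable P (\<lambda>S. Gz (w t S) (S t))"
    and "integrable P (\<lambda>S. Gint (w t S))"
proof -
  interpret pps: product_prob_space "\<lambda>_. M" "{..<T}" by (rule product_prob_spaceI) (rule M_prob)
  have fmP: "finite_measure P" using P_prob by (simp add: prob_space_def)
  define I where "I = {..<T} - {t}"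
  have ins: "{..<T} = insert t I" and fI: "finite I" and tI: "t \<notin> I" using t by (auto simp: I_def)
  note [measurable] = w_meas[OF less_imp_le[OF t]] comp_meas[OF t]
  have m1: "(\<lambda>S. Gz (w t S) (S t)) \<in> borel_measurable P" unfolding phi_def by measurable
  have "AE S in P. \<bar>Gz (w t S) (S t)\<bar> \<le> R * (2 * D)"
    using AE_x_P[OF t]
  proof eventually_elim
    case (elim S)
    have "\<bar>inner (fst (S t)) (w t S - wstar)\<bar> \<le> norm (fst (S t)) * norm (w t S - wstar)"
      by (rule Cauchy_Schwarz_ineq2)
    also have "\<dots> \<le> 1 * (2 * D)" using elim wdist[where t=t and S=S] by (intro mult_mono) auto
    finally have "\<bar>inner (fst (S t)) (w t S - wstar)\<bar> \<le> 2 * D" by simp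
    then show ?case using phi_bd R_ge by (simp add: abs_mult) (rule mult_mono, auto)
  qed
  then show int1: "integrable P (\<lambda>S. Gz (w t S) (S t))"
    using m1 by (intro finite_measure.integrable_const_bound[OF fmP, where B="R * (2 * D)"]) auto
  have "\<And>S. \<bar>Gint (w t S)\<bar> \<le> R * (2 * D)"
    using Gint_bd wdist R_ge by (meson mult_left_mono order_trans less_imp_le)
  then show int2: "integrable P (\<lambda>S. Gint (w t S))"
    using Gint_meas[OF less_imp_le[OF t]]
    by (intro finite_measure.integrable_const_bound[OF fmP, where B="R * (2 * D)"]) auto
  have upd: "w t (S(t := y)) = w t S" for S y by (rule sgd_iter_cong) auto
  have "(\<integral>S. Gz (w t S) (S t) \<partial>P) = (\<integral>S. Gz (w t S) (S t) \<partial>PiM (insert t I) (\<lambda>_. M))"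
    by (simp only: ins)
  also have "\<dots> = (\<integral>S. (\<integral>y. Gz (w t (S(t := y))) ((S(t := y)) t) \<partial>M) \<partial>PiM I (\<lambda>_. M))"
    using int1 unfolding ins by (intro pps.product_integral_insert fI tI)
  also have "\<dots> = (\<integral>S. Gint (w t S) \<partial>PiM I (\<lambda>_. M))"
    unfolding upd Gint_def by simp
  also have "\<dots> = (\<integral>S. (\<integral>y. Gint (w t (S(t := y))) \<partial>M) \<partial>PiM I (\<lambda>_. M))"
    unfolding upd by (simp add: prob_space.prob_space[OF M_prob])
  also have "\<dots> = (\<integral>S. Gint (w t S) \<partial>PiM (insert t I) (\<lambda>_. M))"
    using int2 unfolding ins by (intro pps.product_integral_insert[symmetric] fI tI)
  also have "\<dots> = (\<integral>S. Gint (w t S) \<partial>P)" by (simp only: ins)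
  finally show "(\<integral>S. Gz (w t S) (S t) \<partial>P) = (\<integral>S. Gint (w t S) \<partial>P)" .
qed

lemma Q_meas:
  assumes vm: "(\<lambda>S. v S) \<in> borel_measurable P"
  shows "(\<lambda>S. Q (v S)) \<in> borel_measurable P"
proof -
  interpret sf: sigma_finite_measure Mx using Mx by (rule prob_space_imp_sigma_finite)
  note [measurable] = vm
  have "(\<lambda>(S, x). (inner (v S - wstar) x)\<^sup>2) \<in> borel_measurable (P \<Otimes>\<^sub>M Mx)"
    by measurable
  then show ?thesis unfolding Q_def by (rule sf.borel_measurable_lebesgue_integral)
qed

lemma Qavg:
  fixes v :: "nat \<Rightarrow> 'a"
  shows "Q ((1 / real T) *\<^sub>R (\<Sum>t<T. v t)) \<le> (1 / real T) * (\<Sum>t<T. Q (v t))"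
proof -
  have Tp: "real T > 0" using T by simp
  have ws_eq: "(1 / real T) *\<^sub>R (\<Sum>t<T. v t) - wstar = (1 / real T) *\<^sub>R (\<Sum>t<T. v t - wstar)"
    using Tp by (simp add: sum_subtractf scaleR_diff_right sum_constant_scaleR)
  have pw: "(inner ((1 / real T) *\<^sub>R (\<Sum>t<T. v t) - wstar) x)\<^sup>2 \<le> (1 / real T) * (\<Sum>t<T. (inner (v t - wstar) x)\<^sup>2)" for x
  proof -
    have "inner ((1 / real T) *\<^sub>R (\<Sum>t<T. v t) - wstar) x = (\<Sum>t<T. inner (v t - wstar) x) / real T"
      unfolding ws_eq by (simp add: inner_sum_left)
    then have "(inner ((1 / real T) *\<^sub>R (\<Sum>t<T. v t) - wstar) x)\<^sup>2 = (\<Sum>t<T. inner (v t - wstar) x)\<^sup>2 / (real T)\<^sup>2"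
      by (simp add: power_divide)
    also have "\<dots> \<le> ((\<Sum>t<T. (inner (v t - wstar) x)\<^sup>2) * real T) / (real T)\<^sup>2"
      using sum_squared_le_sum_of_squares[of "\<lambda>t. inner (v t - wstar) x" "{..<T}"]
      by (intro divide_right_mono) auto
    also have "\<dots> = (1 / real T) * (\<Sum>t<T. (inner (v t - wstar) x)\<^sup>2)"
      using Tp by (simp add: power2_eq_square field_simps)
    finally show ?thesis .
  qed
  have isum: "integrable Mx (\<lambda>x. (1 / real T) * (\<Sum>t<T. (inner (v t - wstar) x)\<^sup>2))"
    by (rule Bochner_Integration.integrable_mult_right, rule Bochner_Integration.integrable_sum, rule Q_int)
  have "Q ((1 / real T) *\<^sub>R (\<Sum>t<T. v t)) \<le> (\<integral>x. (1 / real T) * (\<Sum>t<T. (inner (v t - wstar) x)\<^sup>2) \<partial>Mx)"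
    unfolding Q_def using pw by (intro integral_mono[OF Q_int isum])
  also have "\<dots> = (1 / real T) * (\<Sum>t<T. Q (v t))"
    unfolding Q_def by (simp add: Bochner_Integration.integral_sum[OF Q_int])
  finally show ?thesis .
qed

lemma avg_bd: "norm ((1 / real T) *\<^sub>R (\<Sum>t<T. w t S)) \<le> D"
proof -
  have "norm (\<Sum>t<T. w t S) \<le> (\<Sum>t<T. norm (w t S))" by (rule norm_sum)
  also have "\<dots> \<le> (\<Sum>t<(T::nat). D)" by (intro sum_mono w_bd)
  also have "\<dots> = real T * D" by simp
  finally have "norm (\<Sum>t<T. w t S) \<le> real T * D" .
  then show ?thesis using T by (simp add: field_simps)
qed

lemma main:
  "(\<integral>S. sq_risk Mx Me wstar (sgd_avg D R T wstar S) \<partial>P) - sq_risk Mx Me wstar wstar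
     \<le> R * D / ((1 - \<alpha>) * sqrt (real T))"
proof -
  interpret Pp: prob_space P by (rule P_prob)
  define wb where "wb S = (1 / real T) *\<^sub>R (\<Sum>t<T. w t S)" for S
  have wb_eq: "sgd_avg D R T wstar S = wb S" for S by (simp add: sgd_avg_def wb_def)
  have wbm: "(\<lambda>S. wb S) \<in> borel_measurable P"
    unfolding wb_def by (intro borel_measurable_scaleR borel_measurable_const borel_measurable_sum w_meas) auto
  have Qb: "\<bar>Q v\<bar> \<le> (2 * D)\<^sup>2" if "norm v \<le> D" for v
  proof -
    have "norm (v - wstar) \<le> norm v + norm wstar" by (rule norm_triangle_ineq4)
    then have "norm (v - wstar) \<le> 2 * D" using that ws by simp
    then have "(norm (v - wstar))\<^sup>2 \<le> (2 * D)\<^sup>2" by (intro power_mono) auto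
    then show ?thesis using Q_bd[of v] by simp
  qed
  have qi: "integrable P (\<lambda>S. Q (w t S))" if "t < T" for t
    using Qb[OF w_bd] Q_meas[OF w_meas] that
    by (intro Pp.integrable_const_bound[where B="(2 * D)\<^sup>2"]) auto
  have qbi: "integrable P (\<lambda>S. Q (wb S))"
    using Qb[OF avg_bd] Q_meas[OF wbm]
    by (intro Pp.integrable_const_bound[where B="(2 * D)\<^sup>2"]) (auto simp: wb_def)
  define A where "A = (\<Sum>t<T. (\<integral>S. Q (w t S) \<partial>P))"
  define B where "B = (D\<^sup>2 + real T * eta\<^sup>2 * R\<^sup>2) / (2 * eta)"
  have S1: "(\<integral>S. sq_risk Mx Me wstar (sgd_avg D R T wstar S) \<partial>P) = sq_risk Mx Me wstar wstar + 1/2 * (\<integral>S. Q (wb S) \<partial>P)"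
  proof -
    have "(\<integral>S. sq_risk Mx Me wstar (sgd_avg D R T wstar S) \<partial>P) = (\<integral>S. sq_risk Mx Me wstar wstar + 1/2 * Q (wb S) \<partial>P)"
      by (rule Bochner_Integration.integral_cong[OF refl]) (simp only: wb_eq, rule E1)
    also have "\<dots> = sq_risk Mx Me wstar wstar + 1/2 * (\<integral>S. Q (wb S) \<partial>P)"
      using qbi by (simp add: Pp.prob_space)
    finally show ?thesis .
  qed
  have S2: "(\<integral>S. Q (wb S) \<partial>P) \<le> (1 / real T) * A"
  proof -
    have "(\<integral>S. Q (wb S) \<partial>P) \<le> (\<integral>S. (1 / real T) * (\<Sum>t<T. Q (w t S)) \<partial>P)"
      using qbi qi unfolding wb_def by (intro integral_mono Qavg integrable_mult_right integrable_sum) auto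
    also have "\<dots> = (1 / real T) * A"
      unfolding A_def using qi by (simp add: Bochner_Integration.integral_sum)
    finally show ?thesis .
  qed
  have S3: "(1 - \<alpha>) * (\<integral>S. Q (w t S) \<partial>P) \<le> (\<integral>S. Gz (w t S) (S t) \<partial>P)" if t: "t < T" for t
  proof -
    have "(1 - \<alpha>) * (\<integral>S. Q (w t S) \<partial>P) = (\<integral>S. (1 - \<alpha>) * Q (w t S) \<partial>P)" by simp
    also have "\<dots> \<le> (\<integral>S. Gint (w t S) \<partial>P)"
    proof (rule integral_mono)
      show "integrable P (\<lambda>S. (1 - \<alpha>) * Q (w t S))" by (rule Bochner_Integration.integrable_mult_right) (rule qi[OF t])
      show "integrable P (\<lambda>S. Gint (w t S))" by (rule indep_step(3)[OF t])
      show "(1 - \<alpha>) * Q (w t S) \<le> Gint (w t S)" for S by (rule E2[OF w_bd])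
    qed
    also have "\<dots> = (\<integral>S. Gz (w t S) (S t) \<partial>P)" using indep_step(1)[OF t] by simp
    finally show ?thesis .
  qed
  have S4: "(\<Sum>t<T. (\<integral>S. Gz (w t S) (S t) \<partial>P)) \<le> B"
  proof -
    have "(\<Sum>t<T. (\<integral>S. Gz (w t S) (S t) \<partial>P)) = (\<integral>S. (\<Sum>t<T. Gz (w t S) (S t)) \<partial>P)"
      by (rule Bochner_Integration.integral_sum[symmetric]) (rule indep_step(2), simp)
    also have "\<dots> \<le> B"
    proof (rule Pp.integral_le_const)
      show "integrable P (\<lambda>S. \<Sum>t<T. Gz (w t S) (S t))" by (rule Bochner_Integration.integrable_sum) (rule indep_step(2), simp)
      show "AE S in P. (\<Sum>t<T. Gz (w t S) (S t)) \<le> B"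
        using AE_all_x_P
      proof eventually_elim
        case (elim S)
        have "2 * eta * (\<Sum>t<T. Gz (w t S) (S t)) + (norm (w T S - wstar))\<^sup>2 \<le> D\<^sup>2 + real T * eta\<^sup>2 * R\<^sup>2"
          using elim by (intro telescope) auto
        then have "2 * eta * (\<Sum>t<T. Gz (w t S) (S t)) \<le> D\<^sup>2 + real T * eta\<^sup>2 * R\<^sup>2"
          by (rule aux_drop)
        then show ?case unfolding B_def using eta_ge by (rule aux_div[rotated])
      qed
    qed
    finally show ?thesis .
  qed
  have al: "1 - \<alpha> > 0" using al1 by simp
  have A_bd: "(1 - \<alpha>) * A \<le> B"
  proof -
    have "(1 - \<alpha>) * A = (\<Sum>t<T. (1 - \<alpha>) * (\<integral>S. Q (w t S) \<partial>P))" unfolding A_def by (simp add: sum_distrib_left)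
    also have "\<dots> \<le> (\<Sum>t<T. (\<integral>S. Gz (w t S) (S t) \<partial>P))" by (intro sum_mono S3) auto
    also have "\<dots> \<le> B" by (rule S4)
    finally show ?thesis .
  qed
  have "(\<integral>S. sq_risk Mx Me wstar (sgd_avg D R T wstar S) \<partial>P) - sq_risk Mx Me wstar wstar
        = 1/2 * (\<integral>S. Q (wb S) \<partial>P)" using S1 by simp
  also have "\<dots> \<le> 1/2 * ((1 / real T) * A)" using S2 by simp
  also have "\<dots> \<le> 1/2 * ((1 / real T) * (B / (1 - \<alpha>)))"
    using al _ A_bd by (rule aux_fin) (use T in simp)
  also have "\<dots> \<le> R * D / ((1 - \<alpha>) * sqrt (real T))"
  proof -
    have sT: "(sqrt (real T))\<^sup>2 = real T" by simp
    have sp: "sqrt (real T) > 0" using T by simp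
    note nf = num_final[OF D R_ge(2) sp al]
    show ?thesis unfolding B_def by (rule nf[unfolded sT])
  qed
  finally show ?thesis .
qed

end

theorem theorem1:
  fixes Mx :: "'a::euclidean_space measure"
    and Me Mb :: "real measure"
    and D \<sigma> \<alpha> :: real and T :: nat and wstar :: 'a
  assumes "D > 0" and "\<sigma> \<ge> 0" and "0 \<le> \<alpha>" and "\<alpha> < 1" and "T > 0"
    and "norm wstar \<le> D"
    and "prob_space Mx" and "sets Mx = sets borel"
    and "AE x in Mx. norm x \<le> 1" and "(\<integral>x. x \<partial>Mx) = 0"
    and "prob_space Me" and "sets Me = sets borel"
    and "AE e in Me. \<bar>e\<bar> \<le> \<sigma>" and "(\<integral>e. e \<partial>Me) = 0"
    and "prob_space Mb" and "sets Mb = sets borel"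
    and "measure Mb {b. b \<noteq> 0} = \<alpha>"
  shows "(\<integral>S. sq_risk Mx Me wstar (sgd_avg D (6 * D + \<sigma>) T wstar S)
            \<partial>(PiM {..<T} (\<lambda>_. Mx \<Otimes>\<^sub>M (Me \<Otimes>\<^sub>M Mb))))
         - sq_risk Mx Me wstar wstar
         \<le> (6 * D + \<sigma>) * D / ((1 - \<alpha>) * sqrt (real T))"
  by (rule sgd_setup.main[OF sgd_setup.intro[OF assms]])
end
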